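(* Let $k\ge1$, let $\theta_1,\dots,\theta_{k+1}\in[-\frac{\pi}{2},\frac{\pi}{2}]$ be pairwise distinct, $\theta_{\min}=\min_{p\ne j}|\theta_p-\theta_j|$, and $a=(a_1,\dots,a_{k+1})^T\in\mathbb C^{k+1}$ with $|a_j|\ge m_{\min}>0$ for all $j$. Let $A=(\phi_{2k}(e^{i\theta_1}),\dots,\phi_{2k}(e^{i\theta_{k+1}}))$. For $q\le k$ and $\hat\theta_1,\dots,\hat\theta_q\in\mathbb R$, $\hat a(q)=(\hat a_1,\dots,\hat a_q)^T\in\mathbb C^q$, let $\hat A(q)=(\phi_{2k}(e^{i\hat\theta_1}),\dots,\phi_{2k}(e^{i\hat\theta_q}))$. Then $$\min_{\hat a_p\in\mathbb C,\ \hat\theta_p\in\mathbb R,\ p=1,\dots,q}\|\hat A(q)\hat a(q)-Aa\|_2\ge\frac{\zeta(k+1)\,\xi(k)\,m_{\min}\,\theta_{\min}^{2k}}{\pi^{2k}}.$$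
   Context: $\phi_s(z)=(1,z,\dots,z^s)^T$. For an integer $k\ge1$: $\zeta(k)=\big((\tfrac{k-1}{2})!\big)^2$ if $k$ is odd, $\zeta(k)=(\tfrac{k}{2})!(\tfrac{k-2}{2})!$ if $k$ is even; $\xi(1)=\frac12$, $\xi(k)=\frac{(\frac{k-1}{2})!(\frac{k-3}{2})!}{4}$ if $k\ge3$ is odd, $\xi(k)=\frac{((\frac{k-2}{2})!)^2}{4}$ if $k$ is even. *)

theory Defs
  imports "HOL-Analysis.Analysis"
begin

text \<open>phi_s(z) = (1, z, ..., z^s)^T, as a function of the row index i = 0..s.\<close>
definition phi :: "nat \<Rightarrow> complex \<Rightarrow> nat \<Rightarrow> complex" where
  "phi s z i = (if i \<le> s then z ^ i else 0)"

definition zeta :: "nat \<Rightarrow> real" where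
  "zeta k = (if odd k then (fact ((k - 1) div 2))^2
             else fact (k div 2) * fact ((k - 2) div 2))"

definition xi :: "nat \<Rightarrow> real" where
  "xi k = (if k = 1 then 1/2
           else if odd k then fact ((k - 1) div 2) * fact ((k - 3) div 2) / 4
           else (fact ((k - 2) div 2))^2 / 4)"

definition vnorm2 :: "nat \<Rightarrow> (nat \<Rightarrow> complex) \<Rightarrow> real" where
  "vnorm2 s v = sqrt (\<Sum>i\<le>s. (cmod (v i))^2)"

text \<open>Matrix-vector product (phi_{s}(e^{i t_1}),...,phi_s(e^{i t_n})) c, columns indexed 1..n.\<close>
definition vmult :: "nat \<Rightarrow> nat \<Rightarrow> (nat \<Rightarrow> real) \<Rightarrow> (nat \<Rightarrow> complex) \<Rightarrow> nat \<Rightarrow> complex" where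
  "vmult s n t c i = (\<Sum>p=1..n. phi s (exp (\<i> * of_real (t p))) i * c p)"

end

theory Submission
  imports Defs "HOL-Computational_Algebra.Polynomial"
begin


lemma jordan:
  fixes x :: real assumes "0 \<le> x" "x \<le> pi/2"
  shows "2 * x / pi \<le> sin x"
proof -
  have cv: "convex_on {0..pi/2} (\<lambda>x. - sin x)"
  proof (rule convex_on_realI[where f'="\<lambda>x. - cos x"])
    show "connected {0..pi/2::real}" by simp
    show "((\<lambda>x. - sin x) has_real_derivative - cos x) (at x)" for x
      by (auto intro!: derivative_eq_intros)
    show "- cos x \<le> - cos y" if "x \<in> {0..pi/2}" "y \<in> {0..pi/2}" "x \<le> y" for x y
      using that cos_monotone_0_pi_le[of x y] by auto
  qed
  define t where "t = 2 * x / pi"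
  have t: "0 \<le> t" "t \<le> 1" using assms pi_gt_zero unfolding t_def by (auto simp: field_simps)
  have "- sin ((1 - t) *\<^sub>R 0 + t *\<^sub>R (pi/2)) \<le> (1 - t) * (- sin 0) + t * (- sin (pi/2))"
    using convex_onD[OF cv, of t 0 "pi/2"] t by auto
  moreover have "(1 - t) *\<^sub>R 0 + t *\<^sub>R (pi/2) = x" unfolding t_def by simp
  ultimately show ?thesis unfolding t_def by simp
qed

lemma chord_sq:
  fixes a b :: real
  shows "(cmod (exp (\<i> * of_real a) - exp (\<i> * of_real b)))^2 = 4 * (sin ((a - b)/2))^2"
proof -
  have "exp (\<i> * of_real a) - exp (\<i> * of_real b) = Complex (cos a - cos b) (sin a - sin b)"
    by (simp add: exp_Euler complex_eq_iff cos_of_real sin_of_real)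
  hence "(cmod (exp (\<i> * of_real a) - exp (\<i> * of_real b)))^2 = (cos a - cos b)^2 + (sin a - sin b)^2"
    by (simp add: cmod_power2)
  also have "\<dots> = 2 - 2 * cos (a - b)"
    by (simp add: cos_diff power2_diff algebra_simps)
  also have "cos (a - b) = 1 - 2 * (sin ((a-b)/2))^2"
    proof -
    have "2 * ((a-b)/2) = a - b" by simp
    thus ?thesis using cos_double_sin[of "(a-b)/2"] by metis
  qed
  finally show ?thesis by simp
qed

lemma chord:
  fixes a b :: real assumes "\<bar>a - b\<bar> \<le> pi"
  shows "2 / pi * \<bar>a - b\<bar> \<le> cmod (exp (\<i> * of_real a) - exp (\<i> * of_real b))"
proof -
  have j: "2 * (\<bar>a - b\<bar>/2) / pi \<le> sin (\<bar>a - b\<bar>/2)"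
    by (rule jordan) (use assms in auto)
  have "\<bar>sin ((a - b)/2)\<bar> = sin (\<bar>a - b\<bar>/2)"
  proof -
    have p: "0 \<le> sin (\<bar>a - b\<bar>/2)" using j pi_gt_zero by (smt (verit) divide_nonneg_pos)
    show ?thesis
    proof (cases "a \<ge> b")
      case True then show ?thesis using p by simp
    next
      case False
      hence "(a - b)/2 = - (\<bar>a - b\<bar>/2)" by (simp add: abs_if field_simps)
      then show ?thesis using p by (simp only: sin_minus)
    qed
  qed
  moreover have "cmod (exp (\<i> * of_real a) - exp (\<i> * of_real b)) = 2 * \<bar>sin ((a - b)/2)\<bar>"
    using chord_sq[of a b] by (metis abs_of_nonneg norm_ge_zero real_sqrt_abs real_sqrt_mult
        real_sqrt_four abs_mult power2_eq_square real_sqrt_abs2)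
  ultimately show ?thesis using j by (simp add: field_simps)
qed



lemma lin_prod_degree:
  fixes f :: "nat \<Rightarrow> complex"
  assumes "finite A" shows "degree (\<Prod>i\<in>A. [:- f i, 1:]) = card A"
  using assms by (subst degree_prod_eq_sum_degree) auto

lemma lin_prod_coeff:
  fixes f :: "nat \<Rightarrow> complex"
  assumes "finite A" shows "coeff (\<Prod>i\<in>A. [:- f i, 1:]) (card A) = 1"
proof -
  have "lead_coeff (\<Prod>i\<in>A. [:- f i, 1:]) = 1" by (simp add: lead_coeff_prod)
  thus ?thesis using lin_prod_degree[OF assms, of f] by simp
qed

lemma poly_sum_upto:
  fixes p :: "complex poly"
  assumes "degree p \<le> N" shows "poly p x = (\<Sum>i\<le>N. coeff p i * x ^ i)"
proof -
  have "poly p x = (\<Sum>i\<le>degree p. coeff p i * x ^ i)" by (rule poly_altdef)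
  also have "\<dots> = (\<Sum>i\<le>N. coeff p i * x ^ i)"
    by (intro sum.mono_neutral_left) (use assms in \<open>auto simp: coeff_eq_0\<close>)
  finally show ?thesis .
qed

lemma lagrange_sum:
  fixes z :: "nat \<Rightarrow> complex" and R :: "complex poly"
  assumes fin: "finite I" and inj: "inj_on z I" and deg: "degree R < card I"
  shows "(\<Sum>j\<in>I. poly R (z j) / poly (\<Prod>i\<in>I-{j}. [:- z i, 1:]) (z j)) = coeff R (card I - 1)"
    and "\<And>j. j \<in> I \<Longrightarrow> poly (\<Prod>i\<in>I-{j}. [:- z i, 1:]) (z j) \<noteq> 0"
proof -
  define Q where "Q j = (\<Prod>i\<in>I-{j}. [:- z i, 1:])" for j
  have Qz: "poly (Q j) (z l) = 0" if "j \<in> I" "l \<in> I" "l \<noteq> j" for j l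
    using that fin unfolding Q_def poly_prod by (intro prod_zero) auto
  have nz: "poly (Q j) (z j) \<noteq> 0" if "j \<in> I" for j
    using that fin inj unfolding Q_def poly_prod by (auto simp: inj_on_def)
  then show "\<And>j. j \<in> I \<Longrightarrow> poly (\<Prod>i\<in>I-{j}. [:- z i, 1:]) (z j) \<noteq> 0" unfolding Q_def .
  have cI: "card I \<ge> 1" using deg by linarith
  have degQ: "degree (Q j) = card I - 1" and cQ: "coeff (Q j) (card I - 1) = 1" if "j \<in> I" for j
    using lin_prod_degree[of "I-{j}" z] lin_prod_coeff[of "I-{j}" z] that fin
    unfolding Q_def by (auto simp: card_Diff_singleton)
  define c where "c j = poly R (z j) / poly (Q j) (z j)" for j
  define S where "S = (\<Sum>j\<in>I. smult (c j) (Q j))"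
  have "R = S"
  proof (rule poly_eqI_degree[where A="z ` I"])
    fix x assume "x \<in> z ` I"
    then obtain l where l: "l \<in> I" "x = z l" by auto
    have "poly S x = (\<Sum>j\<in>I. c j * poly (Q j) (z l))" unfolding S_def l by (simp add: poly_sum)
    also have "\<dots> = c l * poly (Q l) (z l)"
      by (rule sum.remove[OF fin l(1), THEN trans]) (auto intro!: sum.neutral simp: Qz l)
    also have "\<dots> = poly R x" using nz[OF l(1)] l unfolding c_def by simp
    finally show "poly R x = poly S x" by simp
  next
    show "degree R < card (z ` I)" using deg card_image[OF inj] by simp
    have "degree S \<le> card I - 1" unfolding S_def
      by (rule degree_sum_le[OF fin]) (use degQ in \<open>auto intro: order.trans[OF degree_smult_le]\<close>)
    thus "degree S < card (z ` I)" using card_image[OF inj] cI by simp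
  qed
  hence "coeff R (card I - 1) = (\<Sum>j\<in>I. c j * coeff (Q j) (card I - 1))" unfolding S_def using coeff_sum[of "\<lambda>j. smult (c j) (Q j)" I "card I - 1"] by simp
  also have "\<dots> = (\<Sum>j\<in>I. c j)" by (intro sum.cong refl) (metis cQ mult.right_neutral)
  finally have "coeff R (card I - 1) = (\<Sum>j\<in>I. c j)" .
  thus "(\<Sum>j\<in>I. poly R (z j) / poly (\<Prod>i\<in>I-{j}. [:- z i, 1:]) (z j)) = coeff R (card I - 1)"
    unfolding c_def Q_def by simp
qed

lemma l1_pCons0:
  fixes p :: "complex poly"
  assumes "\<And>N. (\<Sum>i\<le>N. cmod (coeff p i)) \<le> B" "0 \<le> B"
  shows "(\<Sum>i\<le>N. cmod (coeff (pCons 0 p) i)) \<le> B"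
proof (cases N)
  case 0 then show ?thesis using assms by simp
next
  case (Suc M)
  have "(\<Sum>i\<le>N. cmod (coeff (pCons 0 p) i)) = (\<Sum>i\<le>M. cmod (coeff p i))"
    unfolding Suc sum.atMost_Suc_shift by simp
  then show ?thesis using assms by simp
qed

lemma l1_lin:
  fixes p :: "complex poly"
  assumes "\<And>N. (\<Sum>i\<le>N. cmod (coeff p i)) \<le> B" "0 \<le> B"
  shows "(\<Sum>i\<le>N. cmod (coeff ([:- w, 1:] * p) i)) \<le> (1 + cmod w) * B"
proof -
  have e: "[:- w, 1:] * p = smult (- w) p + pCons 0 p" by simp
  have "(\<Sum>i\<le>N. cmod (coeff ([:- w, 1:] * p) i))
      \<le> (\<Sum>i\<le>N. cmod w * cmod (coeff p i) + cmod (coeff (pCons 0 p) i))"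
    unfolding e by (intro sum_mono) (metis coeff_add coeff_smult norm_minus_cancel norm_mult norm_triangle_ineq)
  also have "\<dots> = cmod w * (\<Sum>i\<le>N. cmod (coeff p i)) + (\<Sum>i\<le>N. cmod (coeff (pCons 0 p) i))"
    by (simp add: sum.distrib sum_distrib_left)
  also have "\<dots> \<le> cmod w * B + B"
    using assms l1_pCons0[OF assms] by (intro add_mono mult_left_mono) auto
  finally show ?thesis by (simp add: algebra_simps)
qed

lemma l1_prod:
  fixes f :: "nat \<Rightarrow> complex" and p :: "complex poly"
  assumes "finite A" "\<And>i. i \<in> A \<Longrightarrow> cmod (f i) = 1"
    "\<And>N. (\<Sum>i\<le>N. cmod (coeff p i)) \<le> B" "0 \<le> B"
  shows "(\<Sum>i\<le>N. cmod (coeff ((\<Prod>i\<in>A. [:- f i, 1:]) * p) i)) \<le> 2 ^ card A * B"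
  using assms
proof (induction A arbitrary: N rule: finite_induct)
  case empty then show ?case by simp
next
  case (insert x F)
  have "(\<Sum>i\<le>N. cmod (coeff ([:- f x, 1:] * ((\<Prod>i\<in>F. [:- f i, 1:]) * p)) i))
       \<le> (1 + cmod (f x)) * (2 ^ card F * B)"
    by (rule l1_lin) (use insert in auto)
  moreover have "(\<Prod>i\<in>insert x F. [:- f i, 1:]) * p = [:- f x, 1:] * ((\<Prod>i\<in>F. [:- f i, 1:]) * p)"
    by (simp only: prod.insert[OF insert(1,2)] mult.assoc)
  ultimately show ?case using insert by simp
qed

lemma l1_one: "(\<Sum>i\<le>N. cmod (coeff (1::complex poly) i)) \<le> 1"
proof -
  have "(\<Sum>i\<le>N. cmod (coeff (1::complex poly) i)) = (\<Sum>i\<le>N. if i = 0 then 1 else 0)"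
    by (intro sum.cong) (auto simp: coeff_1)
  also have "\<dots> = 1" by (simp add: sum.delta)
  finally show ?thesis by simp
qed




lemma fact_split:
  assumes "a + b = k" shows "zeta (k+1) \<le> fact a * fact b"
proof -
  define m where "m = k div 2"
  have m: "m \<le> k" unfolding m_def by simp
  have a: "a \<le> k" using assms by simp
  have e1: "fact a * fact (k - a) * (k choose a) = (fact k :: nat)" by (rule binomial_fact_lemma[OF a])
  have e2: "fact m * fact (k - m) * (k choose m) = (fact k :: nat)" by (rule binomial_fact_lemma[OF m])
  have le: "k choose a \<le> k choose m" unfolding m_def by (rule binomial_maximum)
  have pos: "k choose a > 0" using a by simp
  have "fact m * fact (k - m) * (k choose a) \<le> fact m * fact (k - m) * (k choose m)"
    using le by simp
  hence "fact m * fact (k - m) * (k choose a) \<le> fact a * fact (k - a) * (k choose a)"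
    using e1 e2 by simp
  hence nat_le: "fact m * fact (k - m) \<le> (fact a * fact (k - a) :: nat)" using pos by simp
  have z: "zeta (k+1) = real (fact m * fact (k - m))"
  proof (cases "even k")
    case True
    then have "k - m = m" unfolding m_def by auto
    then show ?thesis using True unfolding zeta_def m_def by (simp add: power2_eq_square)
  next
    case False
    then have "(k + 1) div 2 = k - m" "(k + 1 - 2) div 2 = m" unfolding m_def by presburger+
    then show ?thesis using False unfolding zeta_def m_def by (simp add: mult.commute)
  qed
  have "b = k - a" using assms by simp
  then show ?thesis unfolding z using nat_le
    by (metis of_nat_fact of_nat_le_iff of_nat_mult)
qed

lemma zeta_xi:
  assumes "k \<ge> 1" shows "(k+1) * xi k \<le> zeta (k+1)"
proof (cases "k = 1")
  case True then show ?thesis by (simp add: xi_def zeta_def)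
next
  case False
  show ?thesis
  proof (cases "even k")
    case True
    then obtain m where k: "k = 2*m" by blast
    with assms have m: "m \<ge> 1" by simp
    then obtain l where l: "m = Suc l" by (cases m) auto
    have d1: "(k - 2) div 2 = l" unfolding k l by simp
    have d2: "(k + 1 - 1) div 2 = Suc l" unfolding k l by simp
    have xi: "xi k = (fact l)^2/4" using False True d1 unfolding xi_def by simp
    have ze: "zeta (k+1) = (fact (Suc l))^2" using True d2 unfolding zeta_def by simp
    have F: "(fact (Suc l) :: real) = real (Suc l) * fact l" by (rule fact_Suc)
    have "real (k+1) / 4 \<le> real (Suc l) * real (Suc l)" unfolding k l by (simp add: field_simps)
    hence "real (k+1) / 4 * (fact l * fact l) \<le> real (Suc l) * real (Suc l) * (fact l * fact l)"
      by (rule mult_right_mono) simp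
    then show ?thesis unfolding xi ze F by (simp add: power2_eq_square field_simps)
  next
    case odd: False
    then obtain m where k: "k = 2*m+1" using oddE by blast
    with False have m: "m \<ge> 1" by simp
    then obtain l where l: "m = Suc l" by (cases m) auto
    have d1: "(k - 1) div 2 = Suc l" "(k - 3) div 2 = l" unfolding k l by simp_all
    have d2: "(k + 1) div 2 = Suc (Suc l)" "(k + 1 - 2) div 2 = Suc l" unfolding k l by simp_all
    have ev: "even (k+1)" using odd by simp
    have xi: "xi k = fact (Suc l) * fact l / 4" using False odd d1 unfolding xi_def by simp
    have ze: "zeta (k+1) = fact (Suc (Suc l)) * fact (Suc l)" using ev d2 unfolding zeta_def by simp
    have F1: "(fact (Suc (Suc l)) :: real) = real (Suc (Suc l)) * fact (Suc l)" by (rule fact_Suc)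
    have "real (k+1) / 4 \<le> real (Suc (Suc l)) * real (Suc l)" unfolding k l by (simp add: field_simps)
    hence "real (k+1) / 4 * (fact (Suc l) * fact l) \<le> real (Suc (Suc l)) * real (Suc l) * (fact (Suc l) * fact l)"
      by (rule mult_right_mono) simp
    moreover have "(fact (Suc l) :: real) = real (Suc l) * fact l" by (rule fact_Suc)
    ultimately show ?thesis unfolding xi ze F1 by (simp add: field_simps)
  qed
qed



lemma prod_above:
  fixes T :: "real set" and x d :: real
  assumes "finite T" "d > 0" "\<forall>y\<in>T. x + d \<le> y" "\<forall>y\<in>T. \<forall>y'\<in>T. y \<noteq> y' \<longrightarrow> d \<le> \<bar>y - y'\<bar>"
  shows "d ^ card T * fact (card T) \<le> (\<Prod>y\<in>T. y - x) \<and> (T \<noteq> {} \<longrightarrow> x + d * card T \<le> Max T)"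
  using assms
proof (induction "card T" arbitrary: T)
  case 0
  then show ?case by simp
next
  case (Suc n)
  define m where "m = Max T"
  have ne: "T \<noteq> {}" using Suc(2) by auto
  have mT: "m \<in> T" unfolding m_def using Suc(3) ne by simp
  define T' where "T' = T - {m}"
  have cT': "card T' = n" unfolding T'_def using Suc(2) mT Suc(3) by simp
  have IH: "d ^ card T' * fact (card T') \<le> (\<Prod>y\<in>T'. y - x) \<and> (T' \<noteq> {} \<longrightarrow> x + d * card T' \<le> Max T')"
    by (rule Suc(1)) (use cT' Suc(3-6) in \<open>auto simp: T'_def\<close>)
  have mge: "x + d * Suc n \<le> m"
  proof (cases "T' = {}")
    case True
    then have "n = 0" using cT' by simp
    then show ?thesis using Suc(5) mT by simp
  next
    case False
    have fin': "finite T'" using Suc(3) unfolding T'_def by simp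
    have M': "Max T' \<in> T'" using False fin' by simp
    have "Max T' \<le> m" using M' Suc(3) unfolding T'_def m_def by simp
    moreover have "Max T' \<noteq> m" using M' unfolding T'_def by auto
    moreover have "d \<le> \<bar>Max T' - m\<bar>" using Suc(6) M' mT \<open>Max T' \<noteq> m\<close> unfolding T'_def by auto
    ultimately have "Max T' + d \<le> m" by linarith
    then show ?thesis using IH False cT' by (simp add: algebra_simps)
  qed
  have pr: "(\<Prod>y\<in>T. y - x) = (m - x) * (\<Prod>y\<in>T'. y - x)"
    unfolding T'_def using Suc(3) mT by (simp add: prod.remove)
  have "d ^ Suc n * fact (Suc n) = (d * Suc n) * (d ^ n * fact n)" by (simp add: algebra_simps)
  also have "\<dots> \<le> (m - x) * (\<Prod>y\<in>T'. y - x)"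
  proof (rule mult_mono)
    show "d * real (Suc n) \<le> m - x" using mge by (simp add: algebra_simps)
    show "d ^ n * fact n \<le> (\<Prod>y\<in>T'. y - x)" using IH cT' by simp
    show "0 \<le> m - x" using mge Suc(4) by (smt (verit) of_nat_0_le_iff mult_nonneg_nonneg)
    show "0 \<le> d ^ n * fact n" using Suc(4) by simp
  qed
  finally have "d ^ card T * fact (card T) \<le> (\<Prod>y\<in>T. y - x)" using pr Suc(2) by simp
  moreover have "x + d * card T \<le> Max T" using mge Suc(2) m_def by simp
  ultimately show ?case by simp
qed

lemma prod_dist:
  fixes \<theta> :: "nat \<Rightarrow> real" and I :: "nat set" and d :: real
  assumes fin: "finite I" and j0: "j0 \<in> I" and inj: "inj_on \<theta> I" and d: "d > 0"
    and sep: "\<forall>p\<in>I. \<forall>j\<in>I. p \<noteq> j \<longrightarrow> d \<le> \<bar>\<theta> p - \<theta> j\<bar>"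
  shows "d ^ (card I - 1) * zeta (card I) \<le> (\<Prod>j\<in>I-{j0}. \<bar>\<theta> j0 - \<theta> j\<bar>)"
proof -
  define x where "x = \<theta> j0"
  define Y where "Y = \<theta> ` (I - {j0})"
  define A where "A = {y\<in>Y. y > x}"
  define B where "B = {y\<in>Y. y < x}"
  have finY: "finite Y" unfolding Y_def using fin by simp
  have xY: "x \<notin> Y" unfolding Y_def x_def using inj j0 by (auto simp: inj_on_def)
  have "\<forall>y\<in>Y. y \<noteq> x" using xY by auto
  hence YAB: "Y = A \<union> B" unfolding A_def B_def by (auto simp: neq_iff)
  have dAB: "A \<inter> B = {}" unfolding A_def B_def by auto
  have finA: "finite A" and finB: "finite B" using finY unfolding A_def B_def by auto
  have cY: "card Y = card I - 1" unfolding Y_def using inj fin j0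
    by (subst card_image) (auto intro: inj_on_subset simp: card_Diff_singleton)
  have cAB: "card A + card B = card I - 1" using cY YAB dAB finA finB card_Un_disjoint by metis
  have sepY: "\<forall>y\<in>Y. \<forall>y'\<in>Y. y \<noteq> y' \<longrightarrow> d \<le> \<bar>y - y'\<bar>" unfolding Y_def using sep by auto
  have sepX: "\<forall>y\<in>Y. d \<le> \<bar>x - y\<bar>" unfolding Y_def x_def using sep j0 by auto
  have pA: "d ^ card A * fact (card A) \<le> (\<Prod>y\<in>A. y - x)"
  proof -
    have "\<forall>y\<in>A. x + d \<le> y" using sepX unfolding A_def by force
    moreover have "\<forall>y\<in>A. \<forall>y'\<in>A. y \<noteq> y' \<longrightarrow> d \<le> \<bar>y - y'\<bar>" using sepY unfolding A_def by blast
    ultimately show ?thesis using prod_above[of A d x] finA d by blast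
  qed
  define B' where "B' = uminus ` B"
  have cB': "card B' = card B" unfolding B'_def by (simp add: card_image)
  have pB0: "d ^ card B' * fact (card B') \<le> (\<Prod>y\<in>B'. y - (- x))"
  proof -
    have "\<forall>y\<in>B'. - x + d \<le> y" using sepX unfolding B'_def B_def by force
    moreover have "\<forall>y\<in>B'. \<forall>y'\<in>B'. y \<noteq> y' \<longrightarrow> d \<le> \<bar>y - y'\<bar>" using sepY unfolding B'_def B_def by force
    moreover have "finite B'" using finB unfolding B'_def by simp
    ultimately show ?thesis using prod_above[of B' d "- x"] d by blast
  qed
  have "(\<Prod>y\<in>B'. y - (- x)) = (\<Prod>y\<in>B. x - y)"
    unfolding B'_def by (subst prod.reindex) (auto simp: inj_on_def)
  hence pB: "d ^ card B * fact (card B) \<le> (\<Prod>y\<in>B. x - y)" using pB0 cB' by simp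
  have "(\<Prod>j\<in>I-{j0}. \<bar>\<theta> j0 - \<theta> j\<bar>) = (\<Prod>y\<in>Y. \<bar>x - y\<bar>)"
    unfolding Y_def x_def by (subst prod.reindex) (auto intro: inj_on_subset[OF inj])
  also have "\<dots> = (\<Prod>y\<in>A. \<bar>x - y\<bar>) * (\<Prod>y\<in>B. \<bar>x - y\<bar>)"
    unfolding YAB using finA finB dAB by (rule prod.union_disjoint)
  also have "(\<Prod>y\<in>A. \<bar>x - y\<bar>) = (\<Prod>y\<in>A. y - x)" by (intro prod.cong) (auto simp: A_def)
  also have "(\<Prod>y\<in>B. \<bar>x - y\<bar>) = (\<Prod>y\<in>B. x - y)" by (intro prod.cong) (auto simp: B_def)
  finally have eq: "(\<Prod>j\<in>I-{j0}. \<bar>\<theta> j0 - \<theta> j\<bar>) = (\<Prod>y\<in>A. y - x) * (\<Prod>y\<in>B. x - y)" .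
  have "d ^ (card I - 1) * zeta (card I) \<le> d ^ (card I - 1) * (fact (card A) * fact (card B))"
  proof -
    have "card I > 0" using fin j0 by (auto simp: card_gt_0_iff)
    hence "card I = (card I - 1) + 1" by simp
    hence "zeta (card I) \<le> fact (card A) * fact (card B)" using fact_split[OF cAB] by metis
    thus ?thesis using d by (intro mult_left_mono) auto
  qed
  also have "\<dots> = (d ^ card A * fact (card A)) * (d ^ card B * fact (card B))"
    using cAB by (metis (no_types) mult.assoc mult.left_commute power_add)
  also have "\<dots> \<le> (\<Prod>y\<in>A. y - x) * (\<Prod>y\<in>B. x - y)"
  proof (rule mult_mono[OF pA pB])
    show "0 \<le> (\<Prod>y\<in>A. y - x)" by (rule order_trans[OF _ pA]) (use d in simp)
    show "0 \<le> d ^ card B * fact (card B)" using d by simp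
  qed
  finally show ?thesis using eq by simp
qed



theorem theorem3p2:
  fixes k q :: nat and \<theta> :: "nat \<Rightarrow> real" and a :: "nat \<Rightarrow> complex"
    and m_min \<theta>_min :: real
  assumes "k \<ge> 1"
    and "\<forall>j\<in>{1..k+1}. \<theta> j \<in> {-pi/2..pi/2}"
    and "inj_on \<theta> {1..k+1}"
    and "\<theta>_min = Min {\<bar>\<theta> p - \<theta> j\<bar> | p j. p \<in> {1..k+1} \<and> j \<in> {1..k+1} \<and> p \<noteq> j}"
    and "m_min > 0"
    and "\<forall>j\<in>{1..k+1}. cmod (a j) \<ge> m_min"
    and "q \<le> k"
  shows "\<forall>\<theta>h :: nat \<Rightarrow> real. \<forall>ah :: nat \<Rightarrow> complex.
           vnorm2 (2*k) (\<lambda>i. vmult (2*k) q \<theta>h ah i - vmult (2*k) (k+1) \<theta> a i)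
             \<ge> zeta (k+1) * xi k * m_min * \<theta>_min ^ (2*k) / pi ^ (2*k)"
proof (intro allI)
  fix \<theta>h :: "nat \<Rightarrow> real" and ah :: "nat \<Rightarrow> complex"
  note k1 = assms(1) and rng = assms(2) and inj = assms(3) and tm = assms(4)
    and mpos = assms(5) and ma = assms(6) and qk = assms(7)
  define I where "I = {1..k+1}"
  define K where "K = {1..k}"
  define z where "z j = exp (\<i> * of_real (\<theta> j))" for j
  define w where "w p = (if p \<le> q then exp (\<i> * of_real (\<theta>h p)) else 1)" for p
  define c where "c p = (if p \<le> q then ah p else 0)" for p
  define x where "x i = vmult (2*k) q \<theta>h ah i - vmult (2*k) (k+1) \<theta> a i" for i
  have finI: "finite I" and finK: "finite K" unfolding I_def K_def by auto
  have cI: "card I = k + 1" and cK: "card K = k" unfolding I_def K_def by auto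

  have x_eq: "x i = (\<Sum>p\<in>K. w p ^ i * c p) - (\<Sum>j\<in>I. z j ^ i * a j)" if "i \<le> 2*k" for i
  proof -
    have "vmult (2*k) q \<theta>h ah i = (\<Sum>p=1..q. w p ^ i * c p)"
      unfolding vmult_def phi_def w_def c_def using that by (intro sum.cong) auto
    also have "\<dots> = (\<Sum>p\<in>K. w p ^ i * c p)"
      unfolding K_def using qk by (intro sum.mono_neutral_left) (auto simp: c_def)
    finally have 1: "vmult (2*k) q \<theta>h ah i = (\<Sum>p\<in>K. w p ^ i * c p)" .
    have 2: "vmult (2*k) (k+1) \<theta> a i = (\<Sum>j\<in>I. z j ^ i * a j)"
      unfolding vmult_def phi_def z_def I_def using that by (intro sum.cong) auto
    show ?thesis unfolding x_def 1 2 ..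
  qed

  define D where "D = {\<bar>\<theta> p - \<theta> j\<bar> | p j. p \<in> {1..k+1} \<and> j \<in> {1..k+1} \<and> p \<noteq> j}"
  have finD: "finite D"
  proof -
    have "D = (\<lambda>(p,j). \<bar>\<theta> p - \<theta> j\<bar>) ` {(p,j). p \<in> {1..k+1} \<and> j \<in> {1..k+1} \<and> p \<noteq> j}"
      unfolding D_def by auto
    moreover have "finite {(p,j). p \<in> {1..k+1} \<and> j \<in> {1..k+1} \<and> p \<noteq> (j::nat)}"
      by (rule finite_subset[of _ "{1..k+1} \<times> {1..k+1}"]) auto
    ultimately show ?thesis by simp
  qed
  have "\<bar>\<theta> 1 - \<theta> 2\<bar> \<in> D" unfolding D_def using k1 by force
  hence neD: "D \<noteq> {}" by auto
  have tmD: "\<theta>_min \<in> D" unfolding tm D_def[symmetric] using finD neD by simp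
  have tmpos: "\<theta>_min > 0"
  proof -
    obtain p j where "p \<in> I" "j \<in> I" "p \<noteq> j" "\<theta>_min = \<bar>\<theta> p - \<theta> j\<bar>"
      using tmD unfolding D_def I_def by auto
    moreover then have "\<theta> p \<noteq> \<theta> j" using inj unfolding I_def inj_on_def by blast
    ultimately show ?thesis by simp
  qed
  have tmle: "\<theta>_min \<le> \<bar>\<theta> p - \<theta> j\<bar>" if "p \<in> I" "j \<in> I" "p \<noteq> j" for p j
  proof -
    have "\<bar>\<theta> p - \<theta> j\<bar> \<in> D" unfolding D_def using that I_def by auto
    thus ?thesis unfolding tm D_def[symmetric] using finD by simp
  qed
  have pidist: "\<bar>\<theta> p - \<theta> j\<bar> \<le> pi" if "p \<in> I" "j \<in> I" for p j
  proof -
    have "\<theta> p \<in> {-pi/2..pi/2}" "\<theta> j \<in> {-pi/2..pi/2}" using rng that unfolding I_def by auto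
    thus ?thesis by (auto simp: abs_if)
  qed

  have zdist: "2 / pi * \<bar>\<theta> p - \<theta> j\<bar> \<le> cmod (z p - z j)" if "p \<in> I" "j \<in> I" for p j
    unfolding z_def by (rule chord) (rule pidist[OF that])
  have injz: "inj_on z I"
  proof (rule inj_onI)
    fix p j assume pj: "p \<in> I" "j \<in> I" "z p = z j"
    show "p = j"
    proof (rule ccontr)
      assume "p \<noteq> j"
      hence "0 < 2 / pi * \<bar>\<theta> p - \<theta> j\<bar>" using tmle[OF pj(1,2)] tmpos by simp
      thus False using zdist[OF pj(1,2)] pj(3) by simp
    qed
  qed

  define R where "R = (\<Prod>p\<in>K. [:- w p, 1:])"
  define Q where "Q j = (\<Prod>i\<in>I-{j}. [:- z i, 1:])" for j
  have degR: "degree R = k" unfolding R_def using lin_prod_degree[OF finK] cK by simp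
  have coR: "coeff R k = 1" unfolding R_def using lin_prod_coeff[OF finK] cK by simp
  have lag: "(\<Sum>j\<in>I. poly R (z j) / poly (Q j) (z j)) = 1"
    using lagrange_sum(1)[OF finI injz, of R] degR cI coR unfolding Q_def by simp
  have Qnz: "poly (Q j) (z j) \<noteq> 0" if "j \<in> I" for j
    using lagrange_sum(2)[OF finI injz, of R j] degR cI that unfolding Q_def by simp

  obtain j0 where j0: "j0 \<in> I" and big: "1 / real (k+1) \<le> cmod (poly R (z j0) / poly (Q j0) (z j0))"
  proof (rule ccontr)
    assume "\<not> thesis"
    hence lt: "\<forall>j\<in>I. cmod (poly R (z j) / poly (Q j) (z j)) < 1 / real (k+1)" using that by force
    have "1 = cmod (\<Sum>j\<in>I. poly R (z j) / poly (Q j) (z j))" using lag by simp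
    also have "\<dots> \<le> (\<Sum>j\<in>I. cmod (poly R (z j) / poly (Q j) (z j)))" by (rule norm_sum)
    also have "\<dots> < (\<Sum>j\<in>I. 1 / real (k+1))"
      using lt finI cI by (intro sum_strict_mono) auto
    also have "\<dots> = 1" using cI by simp
    finally show False by simp
  qed

  define G where "G = cmod (poly (Q j0) (z j0))"
  have Gpos: "G > 0" unfolding G_def using Qnz[OF j0] by simp
  have Gprod: "G = (\<Prod>j\<in>I-{j0}. cmod (z j0 - z j))"
    unfolding G_def Q_def poly_prod by (simp add: prod_norm)
  have G_lb: "(2/pi)^k * (\<theta>_min ^ k * zeta (k+1)) \<le> G"
  proof -
    have "\<theta>_min ^ (card I - 1) * zeta (card I) \<le> (\<Prod>j\<in>I-{j0}. \<bar>\<theta> j0 - \<theta> j\<bar>)"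
      by (rule prod_dist[OF finI j0 _ tmpos]) (use inj tmle in \<open>auto simp: I_def\<close>)
    hence "\<theta>_min ^ k * zeta (k+1) \<le> (\<Prod>j\<in>I-{j0}. \<bar>\<theta> j0 - \<theta> j\<bar>)" using cI by simp
    hence "(2/pi)^k * (\<theta>_min ^ k * zeta (k+1)) \<le> (2/pi)^k * (\<Prod>j\<in>I-{j0}. \<bar>\<theta> j0 - \<theta> j\<bar>)"
      by (intro mult_left_mono) auto
    also have "\<dots> = (\<Prod>j\<in>I-{j0}. 2/pi * \<bar>\<theta> j0 - \<theta> j\<bar>)"
    proof -
      have "card (I-{j0}) = k" using finI j0 cI by (simp add: card_Diff_singleton)
      thus ?thesis by (simp only: prod.distrib prod_constant)
    qed
    also have "\<dots> \<le> (\<Prod>j\<in>I-{j0}. cmod (z j0 - z j))"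
      by (intro prod_mono) (use zdist j0 in auto)
    finally show ?thesis unfolding Gprod .
  qed

  define P where "P = R * Q j0"
  have RP: "cmod (poly R (z j0)) \<ge> G / real (k+1)"
    using big Gpos unfolding G_def by (simp add: norm_divide field_simps)
  have Pval: "cmod (poly P (z j0)) \<ge> G^2 / real (k+1)"
  proof -
    have "cmod (poly P (z j0)) = cmod (poly R (z j0)) * G" unfolding P_def G_def by (simp add: norm_mult)
    moreover have "G / real (k+1) * G \<le> cmod (poly R (z j0)) * G"
      using RP Gpos by (intro mult_right_mono) auto
    ultimately show ?thesis by (simp add: power2_eq_square)
  qed

  have degQ: "degree (Q j0) = k" unfolding Q_def using lin_prod_degree[of "I-{j0}" z] finI j0 cI
    by (simp add: card_Diff_singleton)
  have degP: "degree P \<le> 2*k" unfolding P_def using degree_mult_le[of R "Q j0"] degR degQ by simp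
  have wn: "cmod (w p) = 1" for p unfolding w_def by simp
  have zn: "cmod (z p) = 1" for p unfolding z_def by simp
  have l1Q: "(\<Sum>i\<le>N. cmod (coeff (Q j0) i)) \<le> 2 ^ k" for N
  proof -
    have "(\<Sum>i\<le>N. cmod (coeff ((\<Prod>i\<in>I-{j0}. [:- z i, 1:]) * 1) i)) \<le> 2 ^ card (I-{j0}) * 1"
      by (rule l1_prod) (use finI zn l1_one in auto)
    thus ?thesis unfolding Q_def using finI j0 cI by (simp add: card_Diff_singleton)
  qed
  have l1P: "(\<Sum>i\<le>2*k. cmod (coeff P i)) \<le> 2^k * 2^k"
  proof -
    have "(\<Sum>i\<le>2*k. cmod (coeff ((\<Prod>p\<in>K. [:- w p, 1:]) * Q j0) i)) \<le> 2 ^ card K * 2^k"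
      by (rule l1_prod) (use finK wn l1Q in auto)
    thus ?thesis unfolding P_def R_def cK .
  qed

  have PK: "poly P (w p) = 0" if "p \<in> K" for p
    unfolding P_def R_def poly_mult poly_prod using finK that by (auto simp: prod_zero_iff)
  have PI: "poly P (z j) = 0" if "j \<in> I" "j \<noteq> j0" for j
    unfolding P_def Q_def poly_mult poly_prod using finI that by (auto simp: prod_zero_iff)
  have pair: "(\<Sum>i\<le>2*k. coeff P i * x i) = - (a j0 * poly P (z j0))"
  proof -
    have "(\<Sum>i\<le>2*k. coeff P i * x i)
        = (\<Sum>i\<le>2*k. coeff P i * ((\<Sum>p\<in>K. w p ^ i * c p) - (\<Sum>j\<in>I. z j ^ i * a j)))"
      using x_eq by (intro sum.cong) auto
    also have "\<dots> = (\<Sum>p\<in>K. c p * (\<Sum>i\<le>2*k. coeff P i * w p ^ i))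
                  - (\<Sum>j\<in>I. a j * (\<Sum>i\<le>2*k. coeff P i * z j ^ i))"
      by (simp add: right_diff_distrib sum_subtractf sum_distrib_left sum.swap[of _ K]
            sum.swap[of _ I] mult_ac)
    also have "\<dots> = (\<Sum>p\<in>K. c p * poly P (w p)) - (\<Sum>j\<in>I. a j * poly P (z j))"
      using poly_sum_upto[OF degP] by simp
    also have "(\<Sum>p\<in>K. c p * poly P (w p)) = 0" using PK by simp
    also have "(\<Sum>j\<in>I. a j * poly P (z j)) = a j0 * poly P (z j0)"
      by (rule sum.remove[OF finI j0, THEN trans]) (auto intro!: sum.neutral simp: PI)
    finally show ?thesis by simp
  qed

  define V where "V = vnorm2 (2*k) x"
  have xV: "cmod (x i) \<le> V" if "i \<le> 2*k" for i
  proof -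
    have "(cmod (x i))^2 \<le> (\<Sum>i'\<le>2*k. (cmod (x i'))^2)"
      by (rule member_le_sum) (use that in auto)
    hence "sqrt ((cmod (x i))^2) \<le> V" unfolding V_def vnorm2_def by (rule real_sqrt_le_mono)
    thus ?thesis by simp
  qed
  have Vnn: "0 \<le> V" unfolding V_def vnorm2_def by (simp add: sum_nonneg)
  have key: "cmod (a j0) * cmod (poly P (z j0)) \<le> 2^k * 2^k * V"
  proof -
    have "cmod (a j0) * cmod (poly P (z j0)) = cmod (\<Sum>i\<le>2*k. coeff P i * x i)"
      unfolding pair by (simp add: norm_mult)
    also have "\<dots> \<le> (\<Sum>i\<le>2*k. cmod (coeff P i) * cmod (x i))"
      by (rule order_trans[OF norm_sum]) (simp add: norm_mult)
    also have "\<dots> \<le> (\<Sum>i\<le>2*k. cmod (coeff P i) * V)"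
      by (intro sum_mono mult_left_mono xV) auto
    also have "\<dots> = (\<Sum>i\<le>2*k. cmod (coeff P i)) * V" by (simp add: sum_distrib_right)
    also have "\<dots> \<le> 2^k * 2^k * V" using l1P Vnn by (rule mult_right_mono)
    finally show ?thesis .
  qed

  have zpos: "zeta (k+1) \<ge> 0" unfolding zeta_def by simp
  define g where "g = (2/pi)^k * (\<theta>_min ^ k * zeta (k+1))"
  have gnn: "0 \<le> g" unfolding g_def using tmpos zpos by simp
  have g2: "g^2 = 4^k * zeta (k+1)^2 * (\<theta>_min ^ (2*k) / pi ^ (2*k))"
  proof -
    have e1: "((2/pi)^k)^2 = (4::real)^k / pi^(2*k)"
    proof -
      have "((2/pi)^k)^2 = (2/pi)^(2*k)" by (metis power_mult mult.commute)
      also have "\<dots> = 2^(2*k) / pi^(2*k)" by (rule power_divide)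
      also have "(2::real)^(2*k) = 4^k" by (simp add: power_mult)
      finally show ?thesis .
    qed
    have e2: "(\<theta>_min ^ k)^2 = \<theta>_min ^ (2*k)" by (metis power_mult mult.commute)
    have "g^2 = ((2/pi)^k)^2 * (\<theta>_min ^ k)^2 * zeta (k+1)^2" unfolding g_def by (simp only: power_mult_distrib mult.assoc)
    also have "\<dots> = 4^k * zeta (k+1)^2 * (\<theta>_min ^ (2*k) / pi ^ (2*k))" unfolding e1 e2 by simp
    finally show ?thesis .
  qed
  have "m_min * (g^2 / real (k+1)) \<le> cmod (a j0) * cmod (poly P (z j0))"
  proof (rule mult_mono)
    show "m_min \<le> cmod (a j0)" using ma j0 unfolding I_def by auto
    have "g^2 \<le> G^2" using G_lb gnn unfolding g_def[symmetric] by (intro power_mono) auto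
    hence "g^2 / real (k+1) \<le> G^2 / real (k+1)" by (intro divide_right_mono) auto
    thus "g^2 / real (k+1) \<le> cmod (poly P (z j0))" using Pval by simp
  qed (use mpos in auto)
  hence A1: "m_min * (g^2 / real (k+1)) \<le> 4^k * V" using key by (simp add: power_mult_distrib[symmetric])
  define T where "T = \<theta>_min ^ (2*k) / pi ^ (2*k)"
  have Tnn: "0 \<le> T" unfolding T_def using tmpos by simp
  have A2: "m_min * zeta (k+1)^2 * T \<le> real (k+1) * V"
  proof -
    have eq: "m_min * (g^2 / real (k+1)) = 4^k * (m_min * zeta (k+1)^2 * T / real (k+1))"
      unfolding g2 T_def by (simp add: field_simps)
    have "4^k * (m_min * zeta (k+1)^2 * T / real (k+1)) \<le> 4^k * V" using A1 unfolding eq .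
    hence "m_min * zeta (k+1)^2 * T / real (k+1) \<le> V" by (subst (asm) mult_le_cancel_left_pos) auto
    thus ?thesis by (simp add: field_simps)
  qed
  have A3: "real (k+1) * (zeta (k+1) * xi k * m_min * T) \<le> m_min * zeta (k+1)^2 * T"
  proof -
    have "real (k+1) * xi k * (zeta (k+1) * m_min * T) \<le> zeta (k+1) * (zeta (k+1) * m_min * T)"
      using zeta_xi[OF k1] zpos mpos Tnn by (intro mult_right_mono) (auto simp: add.commute)
    thus ?thesis by (simp add: power2_eq_square mult_ac)
  qed
  have "real (k+1) * (zeta (k+1) * xi k * m_min * T) \<le> real (k+1) * V" using A2 A3 by linarith
  hence "zeta (k+1) * xi k * m_min * T \<le> V" by simp
  thus "vnorm2 (2*k) (\<lambda>i. vmult (2*k) q \<theta>h ah i - vmult (2*k) (k+1) \<theta> a i)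
             \<ge> zeta (k+1) * xi k * m_min * \<theta>_min ^ (2*k) / pi ^ (2*k)"
    unfolding V_def T_def x_def[symmetric] by simp
qed

end
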